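(* Let $n\geq 1$ be an integer with $n\neq 2$. Then $K_n\times H$ is type I for every finite simple bipartite graph $H$.
   Context: All graphs are finite and simple. $K_n$ is the complete graph on $n$ vertices. A total colouring of a graph $G$ is an assignment of colours to the vertices and edges of $G$ such that any two adjacent vertices, any two edges sharing an endpoint, and any edge and each of its endpoints receive different colours. The total chromatic number $\chi''(G)$ is the minimum number of colours in a total colouring of $G$. A graph $G$ with maximum degree $\Delta(G)$ is called type I if $\chi''(G)=\Delta(G)+1$. The direct product $G\times H$ has vertex set $V(G)\times V(H)$, with $(u,v)$ adjacent to $(u',v')$ if and only if $uu'\in E(G)$ and $vv'\in E(H)$. *)

theory Defs
  imports Main
begin

type_synonym 'a graph = "'a set \<times> 'a set set"

definition verts :: "'a graph \<Rightarrow> 'a set" where "verts G = fst G"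
definition edges :: "'a graph \<Rightarrow> 'a set set" where "edges G = snd G"

definition finite_simple_graph :: "'a graph \<Rightarrow> bool" where
  "finite_simple_graph G \<longleftrightarrow> finite (verts G) \<and>
     (\<forall>e\<in>edges G. \<exists>u v. e = {u, v} \<and> u \<noteq> v \<and> u \<in> verts G \<and> v \<in> verts G)"

definition adj :: "'a graph \<Rightarrow> 'a \<Rightarrow> 'a \<Rightarrow> bool" where
  "adj G u v \<longleftrightarrow> {u, v} \<in> edges G"

definition degree :: "'a graph \<Rightarrow> 'a \<Rightarrow> nat" where
  "degree G v = card {e \<in> edges G. v \<in> e}"

definition max_degree :: "'a graph \<Rightarrow> nat" where
  "max_degree G = (if verts G = {} then 0 else Max (degree G ` verts G))"

definition bipartite :: "'a graph \<Rightarrow> bool" where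
  "bipartite G \<longleftrightarrow> (\<exists>A B. A \<union> B = verts G \<and> A \<inter> B = {} \<and>
     (\<forall>u v. {u, v} \<in> edges G \<longrightarrow> (u \<in> A \<and> v \<in> B) \<or> (u \<in> B \<and> v \<in> A)))"

definition complete_graph :: "nat \<Rightarrow> nat graph" where
  "complete_graph n = ({0..<n}, {{i, j} | i j. i < n \<and> j < n \<and> i \<noteq> j})"

definition direct_product :: "'a graph \<Rightarrow> 'b graph \<Rightarrow> ('a \<times> 'b) graph" where
  "direct_product G H = (verts G \<times> verts H,
     {{(u, v), (u', v')} | u v u' v'. {u, u'} \<in> edges G \<and> {v, v'} \<in> edges H})"

definition total_colouring :: "'a graph \<Rightarrow> nat \<Rightarrow> ('a \<Rightarrow> nat) \<Rightarrow> ('a set \<Rightarrow> nat) \<Rightarrow> bool" where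
  "total_colouring G k f g \<longleftrightarrow>
     (\<forall>v\<in>verts G. f v < k) \<and> (\<forall>e\<in>edges G. g e < k) \<and>
     (\<forall>u v. {u, v} \<in> edges G \<longrightarrow> f u \<noteq> f v) \<and>
     (\<forall>e\<in>edges G. \<forall>e'\<in>edges G. e \<noteq> e' \<and> e \<inter> e' \<noteq> {} \<longrightarrow> g e \<noteq> g e') \<and>
     (\<forall>e\<in>edges G. \<forall>v\<in>e. g e \<noteq> f v)"

definition total_chromatic_number :: "'a graph \<Rightarrow> nat" where
  "total_chromatic_number G = (LEAST k. \<exists>f g. total_colouring G k f g)"

definition type_I :: "'a graph \<Rightarrow> bool" where
  "type_I G \<longleftrightarrow> total_chromatic_number G = max_degree G + 1"

end

theory Submission
  imports Defs "HOL-Number_Theory.Cong"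
begin

lemma fsg_edge: "finite_simple_graph G \<Longrightarrow> e \<in> edges G \<Longrightarrow> \<exists>u v. e = {u,v} \<and> u \<noteq> v \<and> u \<in> verts G \<and> v \<in> verts G"
  unfolding finite_simple_graph_def by blast

lemma fsg_finite_edges: assumes "finite_simple_graph G" shows "finite (edges G)"
proof -
  have "edges G \<subseteq> Pow (verts G)" using fsg_edge[OF assms] by blast
  moreover have "finite (verts G)" using assms unfolding finite_simple_graph_def by blast
  ultimately show ?thesis by (meson finite_Pow_iff rev_finite_subset)
qed

lemma total_colouring_mono: "total_colouring G k f g \<Longrightarrow> k \<le> k' \<Longrightarrow> total_colouring G k' f g"
  unfolding total_colouring_def by (meson order_less_le_trans)

lemma degree_le_max: assumes "finite (verts G)" "v \<in> verts G" shows "degree G v \<le> max_degree G"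
  using assms unfolding max_degree_def by auto

lemma max_degree_attained: assumes "finite (verts G)" "verts G \<noteq> {}"
  shows "\<exists>v\<in>verts G. degree G v = max_degree G"
proof -
  have "Max (degree G ` verts G) \<in> degree G ` verts G" using assms by (intro Max_in) auto
  then obtain v where "v \<in> verts G" "degree G v = Max (degree G ` verts G)" by auto
  thus ?thesis using assms unfolding max_degree_def by auto
qed

lemma lower_bound:
  assumes "finite_simple_graph G" "verts G \<noteq> {}" "total_colouring G k f g"
  shows "max_degree G + 1 \<le> k"
proof -
  have fv: "finite (verts G)" using assms(1) unfolding finite_simple_graph_def by blast
  obtain x where x: "x \<in> verts G" "degree G x = max_degree G" using max_degree_attained[OF fv assms(2)] by blast
  define Ex where "Ex = {e \<in> edges G. x \<in> e}"
  have fE: "finite Ex" using fsg_finite_edges[OF assms(1)] unfolding Ex_def by simp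
  have inj: "inj_on g Ex" unfolding inj_on_def Ex_def using assms(3) unfolding total_colouring_def by blast
  have sub: "insert (f x) (g ` Ex) \<subseteq> {0..<k}" using assms(3) x(1) unfolding total_colouring_def Ex_def by auto
  have nin: "f x \<notin> g ` Ex" using assms(3) unfolding total_colouring_def Ex_def by fastforce
  have "card (insert (f x) (g ` Ex)) = card Ex + 1" using nin fE inj by (simp add: card_image)
  moreover have "card (insert (f x) (g ` Ex)) \<le> k" using card_mono[OF _ sub] by simp
  ultimately show ?thesis using x(2) unfolding degree_def Ex_def by simp
qed

lemma type_I_intro:
  assumes "finite_simple_graph G" "verts G \<noteq> {}" "total_colouring G k f g" "k \<le> max_degree G + 1"
  shows "type_I G"
proof -
  have c: "total_colouring G (max_degree G + 1) f g" using total_colouring_mono[OF assms(3,4)] .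
  have "(LEAST k. \<exists>f g. total_colouring G k f g) = max_degree G + 1"
    by (rule Least_equality) (use c lower_bound[OF assms(1,2)] in blast)+
  thus ?thesis unfolding type_I_def total_chromatic_number_def .
qed

definition proper_ec :: "'a set set \<Rightarrow> ('a set \<Rightarrow> nat) \<Rightarrow> nat \<Rightarrow> bool" where
  "proper_ec F c D \<longleftrightarrow> (\<forall>e\<in>F. c e < D) \<and> (\<forall>e\<in>F. \<forall>e'\<in>F. e \<noteq> e' \<and> e \<inter> e' \<noteq> {} \<longrightarrow> c e \<noteq> c e')"

inductive reach :: "'a set set \<Rightarrow> ('a set \<Rightarrow> nat) \<Rightarrow> nat \<Rightarrow> nat \<Rightarrow> 'a \<Rightarrow> 'a \<Rightarrow> nat \<Rightarrow> bool"
  for F c \<alpha> \<beta> y where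
  base: "reach F c \<alpha> \<beta> y y \<alpha>"
| step: "reach F c \<alpha> \<beta> y w \<gamma> \<Longrightarrow> {w, w'} \<in> F \<Longrightarrow> c {w, w'} = \<gamma> \<Longrightarrow>
          reach F c \<alpha> \<beta> y w' (if \<gamma> = \<alpha> then \<beta> else \<alpha>)"

lemma reach_col: "reach F c \<alpha> \<beta> y w \<gamma> \<Longrightarrow> \<gamma> = \<alpha> \<or> \<gamma> = \<beta>"
  by (induction rule: reach.induct) auto

lemma proper_eq: "proper_ec F c D \<Longrightarrow> e \<in> F \<Longrightarrow> e' \<in> F \<Longrightarrow> e \<inter> e' \<noteq> {} \<Longrightarrow> c e = c e' \<Longrightarrow> e = e'"
  unfolding proper_ec_def by blast

lemma kempe:
  assumes disj: "A \<inter> B = {}"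
    and cross: "\<forall>e\<in>F. \<exists>a b. e = {a, b} \<and> a \<in> A \<and> b \<in> B"
    and prp: "proper_ec F c D" and D: "\<alpha> < D" "\<beta> < D" and ab: "\<alpha> \<noteq> \<beta>"
    and x: "x \<in> A" and y: "y \<in> B"
    and mx: "\<forall>e\<in>F. x \<in> e \<longrightarrow> c e \<noteq> \<alpha>" and my: "\<forall>e\<in>F. y \<in> e \<longrightarrow> c e \<noteq> \<beta>"
  shows "\<exists>c'. proper_ec F c' D \<and> (\<forall>e\<in>F. x \<in> e \<longrightarrow> c' e \<noteq> \<alpha>) \<and> (\<forall>e\<in>F. y \<in> e \<longrightarrow> c' e \<noteq> \<alpha>)"
proof -
  let ?R = "reach F c \<alpha> \<beta> y"
  define sw where "sw \<gamma> = (if \<gamma> = \<alpha> then \<beta> else \<alpha>)" for \<gamma>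
  have par: "(w \<in> B \<longleftrightarrow> \<gamma> = \<alpha>) \<and> w \<in> A \<union> B" if "?R w \<gamma>" for w \<gamma>
    using that
  proof (induction rule: reach.induct)
    case base
    then show ?case using y by auto
  next
    case (step w \<gamma> w')
    obtain a b where ab': "{w, w'} = {a, b}" "a \<in> A" "b \<in> B" using cross step(2) by blast
    have g: "\<gamma> = \<alpha> \<or> \<gamma> = \<beta>" using reach_col[OF step(1)] .
    from ab' have "(w = a \<and> w' = b) \<or> (w = b \<and> w' = a)" by (auto simp: doubleton_eq_iff)
    then show ?case using step(4) disj ab' g ab by auto
  qed
  have entry: "(w = y \<and> \<gamma> = \<alpha>) \<or> (\<exists>w0. ?R w0 (sw \<gamma>) \<and> {w0, w} \<in> F \<and> c {w0, w} = sw \<gamma>)"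
    if "?R w \<gamma>" for w \<gamma>
    using that
  proof (cases rule: reach.cases)
    case base
    then show ?thesis by auto
  next
    case (step w0 \<gamma>0)
    have "\<gamma>0 = \<alpha> \<or> \<gamma>0 = \<beta>" using reach_col[OF step(2)] .
    then have "sw \<gamma> = \<gamma>0" using step(1) ab unfolding sw_def by auto
    then show ?thesis using step by auto
  qed
  define K where "K = {w. \<exists>\<gamma>. ?R w \<gamma>}"
  have yK: "y \<in> K" unfolding K_def using reach.base[of F c \<alpha> \<beta> y] by blast
  have close: "w' \<in> K" if H: "w \<in> K" "{w, w'} \<in> F" "c {w, w'} \<in> {\<alpha>, \<beta>}" for w w'
  proof -
    obtain \<gamma> where g: "?R w \<gamma>" using H(1) unfolding K_def by blast
    show ?thesis
    proof (cases "c {w, w'} = \<gamma>")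
      case True
      then show ?thesis using reach.step[OF g H(2) True] unfolding K_def by blast
    next
      case False
      have gg: "\<gamma> = \<alpha> \<or> \<gamma> = \<beta>" using reach_col[OF g] .
      have cw: "c {w, w'} = sw \<gamma>" using False gg H(3) unfolding sw_def by auto
      from entry[OF g] show ?thesis
      proof
        assume "w = y \<and> \<gamma> = \<alpha>"
        then show ?thesis using cw my H(2) ab unfolding sw_def by auto
      next
        assume "\<exists>w0. ?R w0 (sw \<gamma>) \<and> {w0, w} \<in> F \<and> c {w0, w} = sw \<gamma>"
        then obtain w0 where w0: "?R w0 (sw \<gamma>)" "{w0, w} \<in> F" "c {w0, w} = sw \<gamma>" by blast
        have "{w0, w} = {w, w'}"
          by (rule proper_eq[OF prp w0(2) H(2)]) (use w0(3) cw in auto)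
        then have "w0 = w' \<or> w = w'" by (auto simp: doubleton_eq_iff)
        then show ?thesis using w0(1) H(1) unfolding K_def by blast
      qed
    qed
  qed
  have edgeK: "e \<subseteq> K" if H: "e \<in> F" "z \<in> e" "z \<in> K" "c e \<in> {\<alpha>, \<beta>}" for e z
  proof -
    obtain a b where e: "e = {a, b}" using cross H(1) by blast
    have "z = a \<or> z = b" using H(2) e by auto
    then show ?thesis
    proof
      assume "z = a" then show ?thesis using close[of a b] H e by auto
    next
      assume "z = b" then show ?thesis using close[of b a] H e by (auto simp: insert_commute)
    qed
  qed
  have xK: "x \<notin> K"
  proof
    assume "x \<in> K"
    then obtain \<gamma> where g: "?R x \<gamma>" unfolding K_def by blast
    have "x \<notin> B" using x disj by blast
    then have "\<gamma> \<noteq> \<alpha>" using par[OF g] by blast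
    then have gb: "\<gamma> = \<beta>" using reach_col[OF g] by blast
    have "x \<noteq> y" using x y disj by blast
    then obtain w0 where "{w0, x} \<in> F" "c {w0, x} = sw \<gamma>" using entry[OF g] by blast
    then show False using mx gb ab unfolding sw_def by auto
  qed
  define c' where "c' e = (if (\<exists>z\<in>e. z \<in> K) \<and> c e \<in> {\<alpha>, \<beta>} then sw (c e) else c e)" for e
  have P1: "\<forall>e\<in>F. c' e < D" using prp D unfolding proper_ec_def c'_def sw_def by auto
  have P2: "c' e1 \<noteq> c' e2" if H: "e1 \<in> F" "e2 \<in> F" "e1 \<noteq> e2" "e1 \<inter> e2 \<noteq> {}" for e1 e2
  proof -
    obtain z where z: "z \<in> e1" "z \<in> e2" using H(4) by blast
    have cne: "c e1 \<noteq> c e2" using prp H unfolding proper_ec_def by blast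
    let ?s1 = "(\<exists>z\<in>e1. z \<in> K) \<and> c e1 \<in> {\<alpha>, \<beta>}"
    let ?s2 = "(\<exists>z\<in>e2. z \<in> K) \<and> c e2 \<in> {\<alpha>, \<beta>}"
    have s1z: "z \<in> K" if H0: ?s1 using edgeK[OF \<open>e1 \<in> F\<close>] z H0 by blast
    have s2z: "z \<in> K" if H0: ?s2 using edgeK[OF \<open>e2 \<in> F\<close>] z H0 by blast
    show ?thesis
    proof (cases ?s1; cases ?s2)
      assume a: ?s1 ?s2 then show ?thesis using cne ab unfolding c'_def sw_def by auto
    next
      assume a: ?s1 "\<not> ?s2"
      then have "c e2 \<notin> {\<alpha>, \<beta>}" using s1z z by blast
      then show ?thesis using a unfolding c'_def sw_def by auto
    next
      assume a: "\<not> ?s1" ?s2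
      then have "c e1 \<notin> {\<alpha>, \<beta>}" using s2z z by blast
      then show ?thesis using a unfolding c'_def sw_def by auto
    next
      assume a: "\<not> ?s1" "\<not> ?s2" then show ?thesis using cne unfolding c'_def by auto
    qed
  qed
  have X: "\<forall>e\<in>F. x \<in> e \<longrightarrow> c' e \<noteq> \<alpha>"
  proof (intro ballI impI)
    fix e assume e: "e \<in> F" "x \<in> e"
    show "c' e \<noteq> \<alpha>"
    proof (cases "(\<exists>z\<in>e. z \<in> K) \<and> c e \<in> {\<alpha>, \<beta>}")
      case True
      then have "e \<subseteq> K" using edgeK[OF e(1)] by blast
      then show ?thesis using xK e(2) by blast
    next
      case False then show ?thesis using mx e unfolding c'_def by auto
    qed
  qed
  have Y: "\<forall>e\<in>F. y \<in> e \<longrightarrow> c' e \<noteq> \<alpha>"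
  proof (intro ballI impI)
    fix e assume e: "e \<in> F" "y \<in> e"
    show "c' e \<noteq> \<alpha>"
    proof (cases "(\<exists>z\<in>e. z \<in> K) \<and> c e \<in> {\<alpha>, \<beta>}")
      case True
      then show ?thesis using my e ab unfolding c'_def sw_def by auto
    next
      case False then show ?thesis using yK e unfolding c'_def by auto
    qed
  qed
  show ?thesis using P1 P2 X Y unfolding proper_ec_def by blast
qed

lemma missing_colour: assumes "finite S" "card S < D" shows "\<exists>a<D. a \<notin> S"
proof (rule ccontr)
  assume "\<not> ?thesis"
  then have "{0..<D} \<subseteq> S" by auto
  then have "card {0..<D} \<le> card S" using card_mono[OF assms(1)] by blast
  then have "D \<le> card S" by simp
  then show False using assms(2) by simp
qed

lemma konig:
  assumes fE: "finite E" and disj: "A \<inter> B = {}"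
    and cross: "\<forall>e\<in>E. \<exists>a b. e = {a, b} \<and> a \<in> A \<and> b \<in> B"
    and deg: "\<forall>v. card {e\<in>E. v \<in> e} \<le> D"
  shows "\<exists>c. proper_ec E c D"
proof -
  have "F \<subseteq> E \<Longrightarrow> \<exists>c. proper_ec F c D" if "finite F" for F
    using that
  proof (induction F rule: finite_induct)
    case empty
    then show ?case unfolding proper_ec_def by auto
  next
    case (insert e F)
    obtain c where c: "proper_ec F c D" using insert by blast
    have eE: "e \<in> E" using insert by blast
    obtain x y where xy: "e = {x, y}" "x \<in> A" "y \<in> B" using cross eE by blast
    have crossF: "\<forall>e\<in>F. \<exists>a b. e = {a, b} \<and> a \<in> A \<and> b \<in> B" using cross insert(4) by blast
    have miss: "\<exists>a<D. \<forall>e'\<in>F. v \<in> e' \<longrightarrow> c e' \<noteq> a" if "v \<in> e" for v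
    proof -
      have sub: "{e'\<in>F. v \<in> e'} \<subset> {e'\<in>E. v \<in> e'}" using insert(2,4) that by blast
      have "card {e'\<in>F. v \<in> e'} < card {e'\<in>E. v \<in> e'}"
        by (rule psubset_card_mono) (use fE sub in auto)
      moreover have "card (c ` {e'\<in>F. v \<in> e'}) \<le> card {e'\<in>F. v \<in> e'}"
        using card_image_le[of "{e'\<in>F. v \<in> e'}" c] insert(1) by simp
      moreover have "card {e'\<in>E. v \<in> e'} \<le> D" using deg by blast
      ultimately have "card (c ` {e'\<in>F. v \<in> e'}) < D" by linarith
      then obtain a where "a < D" "a \<notin> c ` {e'\<in>F. v \<in> e'}"
        using missing_colour[of "c ` {e'\<in>F. v \<in> e'}" D] insert(1) by auto
      then show ?thesis by blast
    qed
    obtain \<alpha> where al: "\<alpha> < D" "\<forall>e'\<in>F. x \<in> e' \<longrightarrow> c e' \<noteq> \<alpha>" using miss[of x] xy(1) by blast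
    obtain \<beta> where be: "\<beta> < D" "\<forall>e'\<in>F. y \<in> e' \<longrightarrow> c e' \<noteq> \<beta>" using miss[of y] xy(1) by blast
    obtain c' \<gamma> where c': "proper_ec F c' D" "\<gamma> < D" "\<forall>e'\<in>F. x \<in> e' \<longrightarrow> c' e' \<noteq> \<gamma>"
      "\<forall>e'\<in>F. y \<in> e' \<longrightarrow> c' e' \<noteq> \<gamma>"
    proof (cases "\<alpha> = \<beta>")
      case True
      then show ?thesis using that[of c \<alpha>] c al be by blast
    next
      case False
      show ?thesis using kempe[OF disj crossF c al(1) be(1) False xy(2,3) al(2) be(2)] that al(1) by blast
    qed
    define c'' where "c'' = c'(e := \<gamma>)"
    have "proper_ec (insert e F) c'' D"
      unfolding proper_ec_def
    proof (intro conjI ballI impI)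
      fix e' assume "e' \<in> insert e F" then show "c'' e' < D"
        using c' unfolding c''_def proper_ec_def by auto
    next
      fix e1 e2 assume a: "e1 \<in> insert e F" "e2 \<in> insert e F" "e1 \<noteq> e2 \<and> e1 \<inter> e2 \<noteq> {}"
      show "c'' e1 \<noteq> c'' e2"
      proof (cases "e1 = e")
        case True
        then have "e2 \<in> F" "e2 \<noteq> e" using a by auto
        moreover have "x \<in> e2 \<or> y \<in> e2" using a True xy by auto
        ultimately show ?thesis using True c' unfolding c''_def by auto
      next
        case F1: False
        show ?thesis
        proof (cases "e2 = e")
          case True
          then have "e1 \<in> F" using a F1 by auto
          moreover have "x \<in> e1 \<or> y \<in> e1" using a True xy by auto
          ultimately show ?thesis using True F1 c' unfolding c''_def by auto
        next
          case False
          then show ?thesis using F1 a c'(1) unfolding c''_def proper_ec_def by auto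
        qed
      qed
    qed
    then show ?case by blast
  qed
  then show ?thesis using fE by blast
qed

definition hf :: "nat \<Rightarrow> nat \<Rightarrow> nat" where "hf q s = s * ((q + 1) div 2) mod q"

lemma hf_eq: assumes "odd q" "hf q s = hf q t" shows "[s = t] (mod q)"
proof -
  define h where "h = (q + 1) div 2"
  have h2: "h * 2 = q + 1" using assms(1) unfolding h_def by (auto elim!: oddE)
  have "[s * h = t * h] (mod q)" using assms(2) unfolding hf_def h_def cong_def .
  then have "[s * h * 2 = t * h * 2] (mod q)" by (rule cong_mult) simp
  moreover have "s * h * 2 = s + q * s" "t * h * 2 = t + q * t"
    by (simp_all only: mult.assoc h2) (simp_all add: algebra_simps)
  ultimately have "[s + q * s = t + q * t] (mod q)" by simp
  moreover have "(s + q * s) mod q = s mod q" "(t + q * t) mod q = t mod q" by simp_all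
  ultimately show ?thesis unfolding cong_def by simp
qed

lemma hf_double: assumes "odd q" "z < q" shows "hf q (2 * z) = z"
proof -
  define h where "h = (q + 1) div 2"
  have h2: "h * 2 = q + 1" using assms(1) unfolding h_def by (auto elim!: oddE)
  have "2 * z * h = z * (h * 2)" by simp
  also have "\<dots> = z * q + z" using h2 by simp
  finally have "2 * z * h = z * q + z" .
  then show ?thesis unfolding hf_def h_def[symmetric] using assms(2) by simp
qed

lemma hf_val: assumes "odd q" "z < q" "hf q s = z" shows "[s = 2 * z] (mod q)"
proof -
  have "hf q s = hf q (2 * z)" using hf_double[OF assms(1,2)] assms(3) by simp
  then show ?thesis using hf_eq[OF assms(1)] by blast
qed

lemma hf_lt: "0 < q \<Longrightarrow> hf q s < q" unfolding hf_def by simp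

definition latin_ok :: "nat \<Rightarrow> (nat \<Rightarrow> nat \<Rightarrow> nat) \<Rightarrow> bool" where
  "latin_ok n L \<longleftrightarrow>
     (\<forall>u u'. u < n \<longrightarrow> u' < n \<longrightarrow> u \<noteq> u' \<longrightarrow> L u u' < n \<and> L u u' \<noteq> u \<and> L u u' \<noteq> u') \<and>
     (\<forall>u u1 u2. u < n \<longrightarrow> u1 < n \<longrightarrow> u2 < n \<longrightarrow> u1 \<noteq> u \<longrightarrow> u2 \<noteq> u \<longrightarrow> L u u1 = L u u2 \<longrightarrow> u1 = u2) \<and>
     (\<forall>u u1 u2. u < n \<longrightarrow> u1 < n \<longrightarrow> u2 < n \<longrightarrow> u1 \<noteq> u \<longrightarrow> u2 \<noteq> u \<longrightarrow> L u1 u = L u2 u \<longrightarrow> u1 = u2)"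

lemma latin_odd: assumes "odd n" shows "latin_ok n (\<lambda>u u'. hf n (u + u'))"
proof -
  have n0: "0 < n" using assms by presburger
  have A: "hf n (u + u') \<noteq> u" if "u < n" "u' < n" "u \<noteq> u'" for u u'
  proof
    assume "hf n (u + u') = u"
    then have "[u + u' = 2 * u] (mod n)" using hf_val[OF assms that(1)] by blast
    then have "[u + u' = u + u] (mod n)" by (simp add: mult_2)
    then have "[u' = u] (mod n)" using cong_add_lcancel_nat by blast
    then show False using cong_less_modulus_unique_nat that by blast
  qed
  have B: "hf n (u + u') \<noteq> u'" if "u < n" "u' < n" "u \<noteq> u'" for u u'
    using A[of u' u] that by (simp add: add.commute)
  have R: "u1 = u2" if "u1 < n" "u2 < n" "hf n (u + u1) = hf n (u + u2)" for u u1 u2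
  proof -
    have "[u + u1 = u + u2] (mod n)" using hf_eq[OF assms that(3)] .
    then have "[u1 = u2] (mod n)" using cong_add_lcancel_nat by blast
    then show ?thesis using cong_less_modulus_unique_nat that by blast
  qed
  have C: "u1 = u2" if "u1 < n" "u2 < n" "hf n (u1 + u) = hf n (u2 + u)" for u u1 u2
    using R[of u1 u2 u] that by (simp add: add.commute)
  show ?thesis unfolding latin_ok_def
  proof (intro conjI allI impI)
    fix u u' assume "u < n" "u' < n" "u \<noteq> u'"
    then show "hf n (u + u') < n" "hf n (u + u') \<noteq> u" "hf n (u + u') \<noteq> u'"
      using A B hf_lt[OF n0] by blast+
  next
    fix u u1 u2 assume "u < n" "u1 < n" "u2 < n" "hf n (u + u1) = hf n (u + u2)"
    then show "u1 = u2" using R by blast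
  next
    fix u u1 u2 assume "u < n" "u1 < n" "u2 < n" "hf n (u1 + u) = hf n (u2 + u)"
    then show "u1 = u2" using C by blast
  qed
qed

definition inp :: "nat \<Rightarrow> nat \<Rightarrow> nat \<Rightarrow> nat" where
  "inp q u u' = (if u < q \<and> u' < q then u + u' else if u < q then 2 * u + 1 else 2 * u' + q - 1)"

definition Lev :: "nat \<Rightarrow> nat \<Rightarrow> nat \<Rightarrow> nat" where
  "Lev q u u' = (if u < q \<and> u' < q \<and> u' = Suc u mod q then q else hf q (inp q u u'))"

lemma suc_mod: "u' < q \<Longrightarrow> [u' = Suc u] (mod q) \<Longrightarrow> u' = Suc u mod q"
  unfolding cong_def by simp

lemma two_cancel: "odd (q::nat) \<Longrightarrow> [2 * a = 2 * b] (mod q) \<Longrightarrow> [a = b] (mod q)"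
  using cong_mult_lcancel_nat[of 2 q a b] by simp

lemma latin_even:
  assumes q: "odd q" "3 \<le> q"
  shows "latin_ok (Suc q) (Lev q)"
proof -
  have q0: "0 < q" using q by simp
  have hlt: "hf q s < q" for s using hf_lt[OF q0] .
  have one: "\<not> [1 = 0] (mod q)" using q unfolding cong_def by simp
  have qm1: "\<not> [q - 1 = 0] (mod q)" using q unfolding cong_def by simp
  have D: "Lev q u u' < Suc q \<and> Lev q u u' \<noteq> u \<and> Lev q u u' \<noteq> u'"
    if u: "u < Suc q" "u' < Suc q" "u \<noteq> u'" for u u'
  proof (cases "u < q \<and> u' < q \<and> u' = Suc u mod q")
    case True then show ?thesis unfolding Lev_def by auto
  next
    case F: False
    then have L: "Lev q u u' = hf q (inp q u u')" unfolding Lev_def by auto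
    have ne: "hf q (inp q u u') \<noteq> z" if z: "z < q" "\<not> [inp q u u' = 2 * z] (mod q)" for z
      using hf_val[OF q(1) z(1)] z(2) by blast
    show ?thesis
    proof (cases "u < q \<and> u' < q")
      case True
      then have i: "inp q u u' = u + u'" unfolding inp_def by simp
      have "\<not> [u + u' = 2 * u] (mod q)"
      proof
        assume "[u + u' = 2 * u] (mod q)"
        then have "[u + u' = u + u] (mod q)" by (simp add: mult_2)
        then have "[u' = u] (mod q)" using cong_add_lcancel_nat by blast
        then show False using cong_less_modulus_unique_nat True u(3) by metis
      qed
      moreover have "\<not> [u + u' = 2 * u'] (mod q)"
      proof
        assume "[u + u' = 2 * u'] (mod q)"
        then have "[u + u' = u' + u'] (mod q)" by (simp add: mult_2)
        then have "[u = u'] (mod q)" using cong_add_rcancel_nat by blast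
        then show False using cong_less_modulus_unique_nat True u(3) by metis
      qed
      ultimately show ?thesis using L i ne[of u] ne[of u'] True hlt[of "u + u'"] by auto
    next
      case False
      show ?thesis
      proof (cases "u < q")
        case True
        then have uq: "u' = q" using False u by auto
        have i: "inp q u u' = 2 * u + 1" unfolding inp_def using True uq by simp
        have "\<not> [2 * u + 1 = 2 * u] (mod q)"
        proof
          assume "[2 * u + 1 = 2 * u] (mod q)"
          then have "[1 = 0] (mod q)" using cong_add_lcancel_0_nat by blast
          then show False using one by blast
        qed
        then show ?thesis using L i ne[of u] True uq hlt[of "2 * u + 1"] by auto
      next
        case False
        then have uq: "u = q" "u' < q" using u by auto
        have i: "inp q u u' = 2 * u' + (q - 1)" unfolding inp_def using uq q0 by simp
        have "\<not> [2 * u' + (q - 1) = 2 * u'] (mod q)"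
        proof
          assume "[2 * u' + (q - 1) = 2 * u'] (mod q)"
          then have "[q - 1 = 0] (mod q)" using cong_add_lcancel_0_nat by blast
          then show False using qm1 by blast
        qed
        then show ?thesis using L i ne[of u'] uq hlt[of "2 * u' + (q - 1)"] by auto
      qed
    qed
  qed
  have Lq: "Lev q u u' = hf q (inp q u u')" if "\<not> (u < q \<and> u' < q \<and> u' = Suc u mod q)" for u u'
    using that unfolding Lev_def by auto
  have Lqq: "Lev q u u' = q" if "u < q \<and> u' < q \<and> u' = Suc u mod q" for u u'
    using that unfolding Lev_def by auto
  have uniq: "a = b" if "[a = b] (mod q)" "a < q" "b < q" for a b
    using cong_less_modulus_unique_nat that by blast
  have rowmix: False if "u < q" "u2 < q" "\<not> (u2 = Suc u mod q)" "[2 * u + 1 = u + u2] (mod q)" for u u2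
  proof -
    have "[u + Suc u = u + u2] (mod q)" using that(4) by (simp add: mult_2)
    then have "[u2 = Suc u] (mod q)" using cong_add_lcancel_nat cong_sym by blast
    then show False using suc_mod[OF that(2)] that(3) by blast
  qed
  have R: "u1 = u2" if u: "u < Suc q" "u1 < Suc q" "u2 < Suc q" "u1 \<noteq> u" "u2 \<noteq> u"
    and eq: "Lev q u u1 = Lev q u u2" for u u1 u2
  proof (cases "u < q \<and> u1 < q \<and> u1 = Suc u mod q"; cases "u < q \<and> u2 < q \<and> u2 = Suc u mod q")
    assume "u < q \<and> u1 < q \<and> u1 = Suc u mod q" "u < q \<and> u2 < q \<and> u2 = Suc u mod q"
    then show ?thesis by simp
  next
    assume a: "u < q \<and> u1 < q \<and> u1 = Suc u mod q" "\<not> (u < q \<and> u2 < q \<and> u2 = Suc u mod q)"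
    then show ?thesis using eq Lq[OF a(2)] Lqq[OF a(1)] hlt by (metis less_irrefl)
  next
    assume a: "\<not> (u < q \<and> u1 < q \<and> u1 = Suc u mod q)" "u < q \<and> u2 < q \<and> u2 = Suc u mod q"
    then show ?thesis using eq Lq[OF a(1)] Lqq[OF a(2)] hlt by (metis less_irrefl)
  next
    assume a: "\<not> (u < q \<and> u1 < q \<and> u1 = Suc u mod q)" "\<not> (u < q \<and> u2 < q \<and> u2 = Suc u mod q)"
    have c: "[inp q u u1 = inp q u u2] (mod q)" using eq Lq[OF a(1)] Lq[OF a(2)] hf_eq[OF q(1)] by simp
    show ?thesis
    proof (cases "u < q")
      case uq: True
      show ?thesis
      proof (cases "u1 < q"; cases "u2 < q")
        assume "u1 < q" "u2 < q"
        then have "[u + u1 = u + u2] (mod q)" using c uq unfolding inp_def by simp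
        then show ?thesis using uniq \<open>u1 < q\<close> \<open>u2 < q\<close> cong_add_lcancel_nat by blast
      next
        assume b: "u1 < q" "\<not> u2 < q"
        then have "[2 * u + 1 = u + u1] (mod q)" using c uq unfolding inp_def by (simp add: cong_sym_eq)
        then show ?thesis using rowmix[OF uq b(1)] a(1) uq b(1) by blast
      next
        assume b: "\<not> u1 < q" "u2 < q"
        then have "[2 * u + 1 = u + u2] (mod q)" using c uq unfolding inp_def by simp
        then show ?thesis using rowmix[OF uq b(2)] a(2) uq b(2) by blast
      next
        assume "\<not> u1 < q" "\<not> u2 < q"
        then show ?thesis using u by simp
      qed
    next
      case False
      then have uq: "u = q" "u1 < q" "u2 < q" using u by auto
      then have "[2 * u1 + (q - 1) = 2 * u2 + (q - 1)] (mod q)" using c unfolding inp_def by simp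
      then have "[2 * u1 = 2 * u2] (mod q)" using cong_add_rcancel_nat by blast
      then show ?thesis using two_cancel[OF q(1)] uniq uq by blast
    qed
  qed
  have colmix: False if "u' < q" "u2 < q" "\<not> (u' = Suc u2 mod q)" "[2 * u' + (q - 1) = u2 + u'] (mod q)" for u' u2
  proof -
    have "[2 * u' + (q - 1) + 1 = u2 + u' + 1] (mod q)" using cong_add[OF that(4) cong_refl[of 1]] .
    moreover have "2 * u' + (q - 1) + 1 = (u' + u') + q" "u2 + u' + 1 = u' + Suc u2" using q0 by auto
    ultimately have A: "[(u' + u') + q = u' + Suc u2] (mod q)" by (simp add: mult_2 add.commute)
    have B: "[(u' + u') + q = u' + u'] (mod q)" unfolding cong_def by simp
    have "[u' + u' = u' + Suc u2] (mod q)" using cong_trans[OF cong_sym[OF B] A] .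
    then have "[u' = Suc u2] (mod q)" using cong_add_lcancel_nat by blast
    then show False using suc_mod[OF that(1)] that(3) by blast
  qed
  have C: "u1 = u2" if u: "u' < Suc q" "u1 < Suc q" "u2 < Suc q" "u1 \<noteq> u'" "u2 \<noteq> u'"
    and eq: "Lev q u1 u' = Lev q u2 u'" for u' u1 u2
  proof (cases "u1 < q \<and> u' < q \<and> u' = Suc u1 mod q"; cases "u2 < q \<and> u' < q \<and> u' = Suc u2 mod q")
    assume a: "u1 < q \<and> u' < q \<and> u' = Suc u1 mod q" "u2 < q \<and> u' < q \<and> u' = Suc u2 mod q"
    then have "[Suc u1 = Suc u2] (mod q)" unfolding cong_def by simp
    then have "[u1 = u2] (mod q)" using cong_add_rcancel_nat[where x=u1 and a=1 and y=u2 and n=q] by simp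
    then show ?thesis using uniq a by blast
  next
    assume a: "u1 < q \<and> u' < q \<and> u' = Suc u1 mod q" "\<not> (u2 < q \<and> u' < q \<and> u' = Suc u2 mod q)"
    then show ?thesis using eq Lq[OF a(2)] Lqq[OF a(1)] hlt by (metis less_irrefl)
  next
    assume a: "\<not> (u1 < q \<and> u' < q \<and> u' = Suc u1 mod q)" "u2 < q \<and> u' < q \<and> u' = Suc u2 mod q"
    then show ?thesis using eq Lq[OF a(1)] Lqq[OF a(2)] hlt by (metis less_irrefl)
  next
    assume a: "\<not> (u1 < q \<and> u' < q \<and> u' = Suc u1 mod q)" "\<not> (u2 < q \<and> u' < q \<and> u' = Suc u2 mod q)"
    have c: "[inp q u1 u' = inp q u2 u'] (mod q)" using eq Lq[OF a(1)] Lq[OF a(2)] hf_eq[OF q(1)] by simp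
    show ?thesis
    proof (cases "u' < q")
      case uq: True
      show ?thesis
      proof (cases "u1 < q"; cases "u2 < q")
        assume "u1 < q" "u2 < q"
        then have "[u1 + u' = u2 + u'] (mod q)" using c uq unfolding inp_def by simp
        then show ?thesis using uniq \<open>u1 < q\<close> \<open>u2 < q\<close> cong_add_rcancel_nat by blast
      next
        assume b: "u1 < q" "\<not> u2 < q"
        then have "[2 * u' + (q - 1) = u1 + u'] (mod q)" using c uq unfolding inp_def by (simp add: cong_sym_eq)
        then show ?thesis using colmix[OF uq b(1)] a(1) uq b(1) by blast
      next
        assume b: "\<not> u1 < q" "u2 < q"
        then have "[2 * u' + (q - 1) = u2 + u'] (mod q)" using c uq unfolding inp_def by simp
        then show ?thesis using colmix[OF uq b(2)] a(2) uq b(2) by blast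
      next
        assume "\<not> u1 < q" "\<not> u2 < q"
        then show ?thesis using u by simp
      qed
    next
      case False
      then have uq: "u' = q" "u1 < q" "u2 < q" using u by auto
      then have "[2 * u1 + 1 = 2 * u2 + 1] (mod q)" using c unfolding inp_def by simp
      then have "[2 * u1 = 2 * u2] (mod q)" using cong_add_rcancel_nat by blast
      then show ?thesis using two_cancel[OF q(1)] uniq uq by blast
    qed
  qed
  show ?thesis unfolding latin_ok_def
  proof (intro conjI allI impI)
    fix u u' assume "u < Suc q" "u' < Suc q" "u \<noteq> u'"
    then show "Lev q u u' < Suc q" "Lev q u u' \<noteq> u" "Lev q u u' \<noteq> u'" using D by blast+
  next
    fix u u1 u2 assume "u < Suc q" "u1 < Suc q" "u2 < Suc q" "u1 \<noteq> u" "u2 \<noteq> u" "Lev q u u1 = Lev q u u2"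
    then show "u1 = u2" using R by blast
  next
    fix u u1 u2 assume "u < Suc q" "u1 < Suc q" "u2 < Suc q" "u1 \<noteq> u" "u2 \<noteq> u" "Lev q u1 u = Lev q u2 u"
    then show "u1 = u2" using C by blast
  qed
qed

lemma latin_exists: assumes "n \<noteq> 2" shows "\<exists>L. latin_ok n L"
proof (cases "odd n")
  case True then show ?thesis using latin_odd by blast
next
  case False
  show ?thesis
  proof (cases "n = 0")
    case True then show ?thesis unfolding latin_ok_def by auto
  next
    case n0: False
    then obtain q where q: "n = Suc q" by (cases n) auto
    have "odd q" using False q by simp
    moreover have "q \<noteq> 1" using assms q by simp
    moreover have "3 \<le> q" using \<open>odd q\<close> \<open>q \<noteq> 1\<close> by presburger
    ultimately show ?thesis using latin_even q by blast
  qed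
qed

definition dd :: "nat \<Rightarrow> nat \<Rightarrow> nat \<Rightarrow> nat" where "dd n u w = (w + n - u) mod n"

lemma dd_range: assumes "u < n" "w < n" "w \<noteq> u" shows "1 \<le> dd n u w" "dd n u w < n"
proof -
  show "dd n u w < n" unfolding dd_def using assms by simp
  show "1 \<le> dd n u w"
  proof (rule ccontr)
    assume "\<not> 1 \<le> dd n u w"
    then have "(w + (n - u)) mod n = 0" unfolding dd_def using assms by simp
    then have "[w + (n - u) = u + (n - u)] (mod n)" using assms unfolding cong_def by simp
    then have "[w = u] (mod n)" using cong_add_rcancel_nat by blast
    then show False using cong_less_modulus_unique_nat assms by blast
  qed
qed

lemma dd_inj1: assumes "u < n" "w1 < n" "w2 < n" "dd n u w1 = dd n u w2" shows "w1 = w2"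
proof -
  have "[w1 + (n - u) = w2 + (n - u)] (mod n)" using assms unfolding dd_def cong_def by simp
  then have "[w1 = w2] (mod n)" using cong_add_rcancel_nat by blast
  then show ?thesis using cong_less_modulus_unique_nat assms by blast
qed

lemma dd_inj2: assumes "w < n" "u1 < n" "u2 < n" "dd n u1 w = dd n u2 w" shows "u1 = u2"
proof -
  have "[w + (n - u1) = w + (n - u2)] (mod n)" using assms unfolding dd_def cong_def by simp
  then have "[n - u1 = n - u2] (mod n)" using cong_add_lcancel_nat by blast
  then have "n - u1 = n - u2 \<or> (n - u1 = n \<and> n - u2 = 0) \<or> (n - u1 = 0 \<and> n - u2 = n)"
    using assms unfolding cong_def by (cases "u1 = 0"; cases "u2 = 0") auto
  then show ?thesis using assms by auto
qed

lemma block_eq: fixes k1 k2 m d1 d2 :: nat assumes "k1 * m + d1 = k2 * m + d2" "1 \<le> d1" "d1 \<le> m" "1 \<le> d2" "d2 \<le> m"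
  shows "k1 = k2 \<and> d1 = d2"
proof -
  have "\<not> k1 < k2" if "k1 * m + d1 = k2 * m + d2" "1 \<le> d1" "d1 \<le> m" "1 \<le> d2" for k1 k2 d1 d2 :: nat
  proof
    assume "k1 < k2"
    then have "(k1 + 1) * m \<le> k2 * m" using mult_le_mono1[of "k1 + 1" k2 m] by simp
    then show False using that by (simp add: algebra_simps)
  qed
  then have "k1 = k2" using assms by (metis linorder_neqE_nat)
  then show ?thesis using assms by simp
qed

definition ph :: "nat \<Rightarrow> (nat \<Rightarrow> nat \<Rightarrow> nat) \<Rightarrow> nat \<Rightarrow> nat \<Rightarrow> nat \<Rightarrow> nat" where
  "ph n L u w k = (if k = 0 then L u w else k * (n - 1) + dd n u w)"

context
  fixes n :: nat and L
  assumes lat: "latin_ok n L"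
begin

lemma ph_big: assumes "u < n" "w < n" "w \<noteq> u" "k \<noteq> 0" shows "n \<le> ph n L u w k" "ph n L u w k \<le> (k + 1) * (n - 1)"
proof -
  have d: "1 \<le> dd n u w" "dd n u w < n" using dd_range assms by auto
  have m: "1 * (n - 1) \<le> k * (n - 1)" using assms(4) mult_le_mono1[of 1 k "n - 1"] by simp
  have p: "ph n L u w k = k * (n - 1) + dd n u w" unfolding ph_def using assms(4) by simp
  show "n \<le> ph n L u w k" unfolding p using m d assms(1) by linarith
  show "ph n L u w k \<le> (k + 1) * (n - 1)" unfolding ph_def using assms d by simp
qed

lemma L_props: assumes "u < n" "w < n" "w \<noteq> u" shows "L u w < n" "L u w \<noteq> u" "L u w \<noteq> w"
  using lat assms unfolding latin_ok_def by metis+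

lemma ph_ne: assumes "u < n" "w < n" "w \<noteq> u" shows "ph n L u w k \<noteq> u" "ph n L u w k \<noteq> w"
proof -
  show "ph n L u w k \<noteq> u"
  proof (cases "k = 0")
    case True then show ?thesis using L_props assms unfolding ph_def by simp
  next
    case False then show ?thesis using ph_big[OF assms False] assms by linarith
  qed
  show "ph n L u w k \<noteq> w"
  proof (cases "k = 0")
    case True then show ?thesis using L_props assms unfolding ph_def by simp
  next
    case False then show ?thesis using ph_big[OF assms False] assms by linarith
  qed
qed

lemma ph_bound: assumes "u < n" "w < n" "w \<noteq> u" "k < Dh" "1 \<le> Dh" shows "ph n L u w k < (n - 1) * Dh + 1"
proof (cases "k = 0")
  case True
  have m: "(n - 1) * 1 \<le> (n - 1) * Dh" using assms(5) mult_le_mono2 by blast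
  have "ph n L u w k = L u w" unfolding ph_def using True by simp
  then show ?thesis using m L_props[OF assms(1-3)] by linarith
next
  case False
  have "(k + 1) * (n - 1) \<le> Dh * (n - 1)" using assms(4) mult_le_mono1[of "k + 1" Dh "n - 1"] by simp
  then show ?thesis using ph_big[OF assms(1-3) False] by (simp add: algebra_simps)
qed

lemma ph_split: assumes "u1 < n" "w1 < n" "w1 \<noteq> u1" "u2 < n" "w2 < n" "w2 \<noteq> u2"
  "ph n L u1 w1 k1 = ph n L u2 w2 k2"
  shows "k1 = k2 \<and> (k1 = 0 \<longrightarrow> L u1 w1 = L u2 w2) \<and> (k1 \<noteq> 0 \<longrightarrow> dd n u1 w1 = dd n u2 w2)"
proof -
  have d1: "1 \<le> dd n u1 w1" "dd n u1 w1 < n" using dd_range assms by auto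
  have d2: "1 \<le> dd n u2 w2" "dd n u2 w2 < n" using dd_range assms by auto
  show ?thesis
  proof (cases "k1 = 0"; cases "k2 = 0")
    assume "k1 = 0" "k2 = 0" then show ?thesis using assms(7) unfolding ph_def by simp
  next
    assume a: "k1 = 0" "k2 \<noteq> 0"
    then show ?thesis using assms(7) ph_big[OF assms(4-6) a(2)] L_props[OF assms(1-3)] unfolding ph_def[of n L u1] by simp
  next
    assume a: "k1 \<noteq> 0" "k2 = 0"
    then show ?thesis using assms(7) ph_big[OF assms(1-3) a(1)] L_props[OF assms(4-6)] unfolding ph_def[of n L u2] by simp
  next
    assume a: "k1 \<noteq> 0" "k2 \<noteq> 0"
    then have "k1 * (n - 1) + dd n u1 w1 = k2 * (n - 1) + dd n u2 w2" using assms(7) unfolding ph_def by simp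
    then show ?thesis using block_eq[of k1 "n - 1" "dd n u1 w1" k2 "dd n u2 w2"] d1 d2 a by simp
  qed
qed

lemma ph_row: assumes "u < n" "w1 < n" "w1 \<noteq> u" "w2 < n" "w2 \<noteq> u" "ph n L u w1 k1 = ph n L u w2 k2"
  shows "w1 = w2 \<and> k1 = k2"
proof -
  have s: "k1 = k2 \<and> (k1 = 0 \<longrightarrow> L u w1 = L u w2) \<and> (k1 \<noteq> 0 \<longrightarrow> dd n u w1 = dd n u w2)"
    using ph_split[OF assms(1-3) assms(1,4,5,6)] .
  show ?thesis
  proof (cases "k1 = 0")
    case True then show ?thesis using s lat assms unfolding latin_ok_def by metis
  next
    case False then show ?thesis using s dd_inj1 assms by metis
  qed
qed

lemma ph_col: assumes "w < n" "u1 < n" "w \<noteq> u1" "u2 < n" "w \<noteq> u2" "ph n L u1 w k1 = ph n L u2 w k2"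
  shows "u1 = u2 \<and> k1 = k2"
proof -
  have s: "k1 = k2 \<and> (k1 = 0 \<longrightarrow> L u1 w = L u2 w) \<and> (k1 \<noteq> 0 \<longrightarrow> dd n u1 w = dd n u2 w)"
    using ph_split[OF assms(2,1,3) assms(4,1,5,6)] .
  show ?thesis
  proof (cases "k1 = 0")
    case True then show ?thesis using s lat assms unfolding latin_ok_def by metis
  next
    case False then show ?thesis using s dd_inj2 assms by metis
  qed
qed

end

lemma verts_pair[simp]: "verts (V, E) = V" unfolding verts_def by simp
lemma edges_pair[simp]: "edges (V, E) = E" unfolding edges_def by simp

lemma Kedge: "{u, u'} \<in> edges (complete_graph n) \<longleftrightarrow> u < n \<and> u' < n \<and> u \<noteq> u'"
  unfolding complete_graph_def by (auto simp: doubleton_eq_iff)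

lemma Gverts: "verts (direct_product (complete_graph n) H) = {0..<n} \<times> verts H"
  unfolding direct_product_def complete_graph_def by simp

lemma Gedge: "e \<in> edges (direct_product (complete_graph n) H) \<longleftrightarrow>
  (\<exists>u v u' v'. e = {(u, v), (u', v')} \<and> u < n \<and> u' < n \<and> u \<noteq> u' \<and> {v, v'} \<in> edges H)"
proof -
  have "e \<in> edges (direct_product (complete_graph n) H) \<longleftrightarrow>
    (\<exists>u v u' v'. e = {(u, v), (u', v')} \<and> {u, u'} \<in> edges (complete_graph n) \<and> {v, v'} \<in> edges H)"
    unfolding direct_product_def by simp
  then show ?thesis using Kedge by metis
qed

lemma G_fsg: assumes "finite_simple_graph H" shows "finite_simple_graph (direct_product (complete_graph n) H)"
proof -
  have fv: "finite (verts H)" using assms unfolding finite_simple_graph_def by blast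
  show ?thesis unfolding finite_simple_graph_def
  proof (intro conjI ballI)
    show "finite (verts (direct_product (complete_graph n) H))" unfolding Gverts using fv by simp
  next
    fix e assume "e \<in> edges (direct_product (complete_graph n) H)"
    then obtain u v u' v' where e: "e = {(u, v), (u', v')}" "u < n" "u' < n" "u \<noteq> u'" "{v, v'} \<in> edges H"
      unfolding Gedge by blast
    obtain a b where ab: "{v, v'} = {a, b}" "a \<in> verts H" "b \<in> verts H" using fsg_edge[OF assms e(5)] by blast
    have "v \<in> verts H" "v' \<in> verts H" using ab by (auto simp: doubleton_eq_iff)
    then show "\<exists>x y. e = {x, y} \<and> x \<noteq> y \<and> x \<in> verts (direct_product (complete_graph n) H) \<and> y \<in> verts (direct_product (complete_graph n) H)"
      using e unfolding Gverts by auto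
  qed
qed

lemma G_degree:
  assumes fs: "finite_simple_graph H" and vm: "vm \<in> verts H"
  shows "(n - 1) * degree H vm \<le> degree (direct_product (complete_graph n) H) (0, vm)"
proof -
  let ?G = "direct_product (complete_graph n) H"
  define nb where "nb = {w. {vm, w} \<in> edges H}"
  have bij: "bij_betw (\<lambda>w. {vm, w}) nb {e \<in> edges H. vm \<in> e}"
    unfolding bij_betw_def
  proof
    show "inj_on (\<lambda>w. {vm, w}) nb"
    proof (rule inj_onI)
      fix x y assume "{vm, x} = {vm, y}"
      then have "x \<in> {vm, y}" "y \<in> {vm, x}" by auto
      then show "x = y" by auto
    qed
    show "(\<lambda>w. {vm, w}) ` nb = {e \<in> edges H. vm \<in> e}"
    proof
      show "(\<lambda>w. {vm, w}) ` nb \<subseteq> {e \<in> edges H. vm \<in> e}" unfolding nb_def by auto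
      show "{e \<in> edges H. vm \<in> e} \<subseteq> (\<lambda>w. {vm, w}) ` nb"
      proof
        fix e assume e: "e \<in> {e \<in> edges H. vm \<in> e}"
        then obtain a b where ab: "e = {a, b}" using fsg_edge[OF fs] by blast
        then have "e = {vm, b} \<or> e = {vm, a}" using e by auto
        then show "e \<in> (\<lambda>w. {vm, w}) ` nb" unfolding nb_def using e by auto
      qed
    qed
  qed
  have cnb: "card nb = degree H vm" unfolding degree_def using bij_betw_same_card[OF bij] .
  define S where "S = {1..<n} \<times> nb"
  have cS: "card S = (n - 1) * degree H vm" unfolding S_def using cnb by (simp add: card_cartesian_product)
  define F where "F = (\<lambda>(u :: nat, w). {(0 :: nat, vm), (u, w)})"
  have inj: "inj_on F S"
  proof (rule inj_onI)
    fix x y assume xy: "x \<in> S" "y \<in> S" "F x = F y"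
    obtain u1 w1 where x: "x = (u1, w1)" "1 \<le> u1" using xy(1) unfolding S_def by auto
    obtain u2 w2 where y: "y = (u2, w2)" "1 \<le> u2" using xy(2) unfolding S_def by auto
    have "(u1, w1) \<in> {(0, vm), (u2, w2)}" using xy(3) unfolding x y F_def by auto
    then show "x = y" using x y by auto
  qed
  have sub: "F ` S \<subseteq> {e \<in> edges ?G. (0, vm) \<in> e}"
  proof
    fix e assume "e \<in> F ` S"
    then obtain u w where uw: "u \<in> {1..<n}" "w \<in> nb" "e = {(0, vm), (u, w)}" unfolding S_def F_def by auto
    have f: "{vm, w} \<in> edges H" "0 < n" "u < n" "0 \<noteq> u" using uw unfolding nb_def by auto
    have "e \<in> edges ?G" unfolding Gedge uw(3) using f by blast
    then show "e \<in> {e \<in> edges ?G. (0, vm) \<in> e}" using uw(3) by simp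
  qed
  have fin: "finite {e \<in> edges ?G. (0, vm) \<in> e}" using fsg_finite_edges[OF G_fsg[OF fs]] by simp
  have "card S \<le> card {e \<in> edges ?G. (0, vm) \<in> e}" using card_inj_on_le[OF inj sub fin] .
  then show ?thesis using cS unfolding degree_def by simp
qed

definition gcol :: "nat \<Rightarrow> (nat \<Rightarrow> nat \<Rightarrow> nat) \<Rightarrow> 'a set \<Rightarrow> 'a set \<Rightarrow> ('a set \<Rightarrow> nat) \<Rightarrow> (nat \<times> 'a) set \<Rightarrow> nat" where
  "gcol n L A B c e = ph n L (fst (THE p. p \<in> e \<and> snd p \<in> A)) (fst (THE p. p \<in> e \<and> snd p \<in> B))
     (c {snd (THE p. p \<in> e \<and> snd p \<in> A), snd (THE p. p \<in> e \<and> snd p \<in> B)})"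

lemma gval: assumes "A \<inter> B = {}" "a \<in> A" "b \<in> B"
  shows "gcol n L A B c {(u, a), (w, b)} = ph n L u w (c {a, b})"
proof -
  have 1: "(THE p. p \<in> {(u, a), (w, b)} \<and> snd p \<in> A) = (u, a)"
    by (rule the_equality) (use assms in auto)
  have 2: "(THE p. p \<in> {(u, a), (w, b)} \<and> snd p \<in> B) = (w, b)"
    by (rule the_equality) (use assms in auto)
  show ?thesis unfolding gcol_def 1 2 by simp
qed

theorem corollary2:
  fixes n :: nat and H :: "'a graph"
  assumes "n \<ge> 1" and "n \<noteq> 2"
    and "finite_simple_graph H" and "verts H \<noteq> {}" and "bipartite H"
  shows "type_I (direct_product (complete_graph n) H)"
proof -
  let ?G = "direct_product (complete_graph n) H"
  have n1: "1 \<le> n" and fs: "finite_simple_graph H" using assms by auto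
  have fsG: "finite_simple_graph ?G" using G_fsg[OF fs] .
  have fvH: "finite (verts H)" using fs unfolding finite_simple_graph_def by blast
  have vG: "verts ?G \<noteq> {}" unfolding Gverts using assms(1,4) by auto
  obtain A B where AB: "A \<union> B = verts H" "A \<inter> B = {}"
    and bip: "\<forall>u v. {u, v} \<in> edges H \<longrightarrow> (u \<in> A \<and> v \<in> B) \<or> (u \<in> B \<and> v \<in> A)"
    using assms(5) unfolding bipartite_def by blast
  define Dh where "Dh = max_degree H"
  have degH: "card {e \<in> edges H. v \<in> e} \<le> Dh" for v
  proof (cases "v \<in> verts H")
    case True then show ?thesis using degree_le_max[OF fvH True] unfolding Dh_def degree_def by simp
  next
    case False
    have "{e \<in> edges H. v \<in> e} = {}"
    proof (rule ccontr)
      assume "{e \<in> edges H. v \<in> e} \<noteq> {}"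
      then obtain e where "e \<in> edges H" "v \<in> e" by blast
      then show False using fsg_edge[OF fs, of e] False by auto
    qed
    then have "card {e \<in> edges H. v \<in> e} = 0" by (simp only: card.empty)
    then show ?thesis by simp
  qed
  show ?thesis
  proof (cases "Dh = 0")
    case True
    have EH: "edges H = {}"
    proof (rule ccontr)
      assume "edges H \<noteq> {}"
      then obtain e where e: "e \<in> edges H" by blast
      obtain a b where "e = {a, b}" using fsg_edge[OF fs e] by blast
      then have "a \<in> e" by simp
      have fin: "finite {e \<in> edges H. a \<in> e}" using fsg_finite_edges[OF fs] by simp
      have "card {e \<in> edges H. a \<in> e} = 0" using degH[of a] True by simp
      then have "{e \<in> edges H. a \<in> e} = {}" using fin by simp
      then show False using e \<open>a \<in> e\<close> by blast
    qed
    have EG: "edges ?G = {}"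
    proof (rule ccontr)
      assume "edges ?G \<noteq> {}"
      then obtain e where "e \<in> edges ?G" by blast
      then obtain u v u' v' where "{v, v'} \<in> edges H" unfolding Gedge by blast
      then show False using EH by simp
    qed
    have "total_colouring ?G 1 (\<lambda>_. 0) (\<lambda>_. 0)" unfolding total_colouring_def using EG by simp
    then show ?thesis using type_I_intro[OF fsG vG] by simp
  next
    case False
    then have Dh1: "1 \<le> Dh" by simp
    have cross: "\<forall>e\<in>edges H. \<exists>a b. e = {a, b} \<and> a \<in> A \<and> b \<in> B"
    proof
      fix e assume e: "e \<in> edges H"
      obtain u v where uv: "e = {u, v}" using fsg_edge[OF fs e] by blast
      then have "(u \<in> A \<and> v \<in> B) \<or> (u \<in> B \<and> v \<in> A)" using bip e by blast
      then show "\<exists>a b. e = {a, b} \<and> a \<in> A \<and> b \<in> B" using uv by (auto simp: insert_commute)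
    qed
    obtain c where ec: "proper_ec (edges H) c Dh"
      using konig[OF fsg_finite_edges[OF fs] AB(2) cross] degH by blast
    obtain L where lat: "latin_ok n L" using latin_exists assms(2) by blast
    define N where "N = (n - 1) * Dh + 1"
    have nN: "n \<le> N"
    proof -
      have "n - 1 \<le> (n - 1) * Dh" using mult_le_mono2[OF Dh1, of "n - 1"] by simp
      then show ?thesis unfolding N_def using n1 by linarith
    qed
    have orient: "\<exists>u a w b. e = {(u, a), (w, b)} \<and> a \<in> A \<and> b \<in> B \<and> {a, b} \<in> edges H \<and> u < n \<and> w < n \<and> w \<noteq> u"
      if e: "e \<in> edges ?G" for e
    proof -
      obtain u v u' v' where uv: "e = {(u, v), (u', v')}" "u < n" "u' < n" "u \<noteq> u'" "{v, v'} \<in> edges H"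
        using e unfolding Gedge by blast
      have "(v \<in> A \<and> v' \<in> B) \<or> (v \<in> B \<and> v' \<in> A)" using bip uv(5) by blast
      then show ?thesis
      proof
        assume "v \<in> A \<and> v' \<in> B" then show ?thesis using uv by blast
      next
        assume a: "v \<in> B \<and> v' \<in> A"
        have "e = {(u', v'), (u, v)}" "{v', v} \<in> edges H" using uv by (auto simp: insert_commute)
        then show ?thesis using a uv by blast
      qed
    qed
    define g where "g = gcol n L A B c"
    have gv: "g {(u, a), (w, b)} = ph n L u w (c {a, b})" if "a \<in> A" "b \<in> B" for u a w b
      unfolding g_def using gval[OF AB(2) that] .
    have ecb: "c e < Dh" if "e \<in> edges H" for e using ec that unfolding proper_ec_def by blast
    have col: "total_colouring ?G N fst g"
      unfolding total_colouring_def
    proof (intro conjI ballI allI impI)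
      fix v assume "v \<in> verts ?G"
      then show "fst v < N" using nN unfolding Gverts by auto
    next
      fix e assume "e \<in> edges ?G"
      then obtain u a w b where o: "e = {(u, a), (w, b)}" "a \<in> A" "b \<in> B" "{a, b} \<in> edges H" "u < n" "w < n" "w \<noteq> u"
        using orient by blast
      show "g e < N" unfolding o(1) gv[OF o(2,3)] N_def using ph_bound[OF lat o(5,6,7) ecb[OF o(4)] Dh1] .
    next
      fix x y assume "{x, y} \<in> edges ?G"
      then obtain u v u' v' where uv: "{x, y} = {(u, v), (u', v')}" "u \<noteq> u'" unfolding Gedge by blast
      then have "(x = (u, v) \<and> y = (u', v')) \<or> (x = (u', v') \<and> y = (u, v))" by (auto simp: doubleton_eq_iff)
      then show "fst x \<noteq> fst y" using uv(2) by auto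
    next
      fix e v assume e: "e \<in> edges ?G" and v: "v \<in> e"
      then obtain u a w b where o: "e = {(u, a), (w, b)}" "a \<in> A" "b \<in> B" "{a, b} \<in> edges H" "u < n" "w < n" "w \<noteq> u"
        using orient by blast
      have "v = (u, a) \<or> v = (w, b)" using v o(1) by auto
      then show "g e \<noteq> fst v" unfolding o(1) gv[OF o(2,3)] using ph_ne[OF lat o(5,6,7)] by auto
    next
      fix e1 e2 assume e1: "e1 \<in> edges ?G" and e2: "e2 \<in> edges ?G" and ne: "e1 \<noteq> e2 \<and> e1 \<inter> e2 \<noteq> {}"
      obtain u1 a1 w1 b1 where o1: "e1 = {(u1, a1), (w1, b1)}" "a1 \<in> A" "b1 \<in> B" "{a1, b1} \<in> edges H" "u1 < n" "w1 < n" "w1 \<noteq> u1"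
        using orient[OF e1] by blast
      obtain u2 a2 w2 b2 where o2: "e2 = {(u2, a2), (w2, b2)}" "a2 \<in> A" "b2 \<in> B" "{a2, b2} \<in> edges H" "u2 < n" "w2 < n" "w2 \<noteq> u2"
        using orient[OF e2] by blast
      show "g e1 \<noteq> g e2"
      proof
        assume geq: "g e1 = g e2"
        then have pe: "ph n L u1 w1 (c {a1, b1}) = ph n L u2 w2 (c {a2, b2})"
          unfolding o1(1) o2(1) gv[OF o1(2,3)] gv[OF o2(2,3)] .
        obtain z where z: "z \<in> e1" "z \<in> e2" using ne by blast
        have nab: "x \<noteq> y" if "x \<in> A" "y \<in> B" for x y using that AB(2) by blast
        have "(u1, a1) = (u2, a2) \<or> (w1, b1) = (w2, b2)"
          using z o1(1) o2(1) nab o1(2,3) o2(2,3) by auto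
        then show False
        proof
          assume s: "(u1, a1) = (u2, a2)"
          then have "w1 = w2 \<and> c {a1, b1} = c {a1, b2}"
            using ph_row[OF lat o1(5,6,7) o2(6), of "c {a1, b1}" "c {a2, b2}"] o2(7) pe by auto
          then have cc: "w1 = w2" "c {a1, b1} = c {a1, b2}" by auto
          have "{a1, b1} = {a1, b2}"
            using proper_eq[OF ec o1(4), of "{a1, b2}"] o2(4) s cc(2) by auto
          then have "b1 = b2" using nab[OF o1(2) o1(3)] by (auto simp: doubleton_eq_iff)
          then show False using ne s cc o1(1) o2(1) by auto
        next
          assume s: "(w1, b1) = (w2, b2)"
          then have "u1 = u2 \<and> c {a1, b1} = c {a2, b1}"
            using ph_col[OF lat o1(6,5) _ o2(5), of "c {a1, b1}" "c {a2, b2}"] o1(7) o2(7) pe by auto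
          then have cc: "u1 = u2" "c {a1, b1} = c {a2, b1}" by auto
          have "{a1, b1} = {a2, b1}"
            using proper_eq[OF ec o1(4), of "{a2, b1}"] o2(4) s cc(2) by auto
          then have "a1 = a2" using nab[OF o1(2) o1(3)] by (auto simp: doubleton_eq_iff)
          then show False using ne s cc o1(1) o2(1) by auto
        qed
      qed
    qed
    obtain vm where vm: "vm \<in> verts H" "degree H vm = Dh"
      using max_degree_attained[OF fvH assms(4)] unfolding Dh_def by blast
    have "(n - 1) * Dh \<le> degree ?G (0, vm)" using G_degree[OF fs vm(1)] vm(2) by simp
    moreover have "degree ?G (0, vm) \<le> max_degree ?G"
      using degree_le_max[of ?G "(0, vm)"] fsG vm(1) n1 unfolding finite_simple_graph_def Gverts by auto
    ultimately have "N \<le> max_degree ?G + 1" unfolding N_def by simp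
    then show ?thesis using type_I_intro[OF fsG vG col] by simp
  qed
qed


end
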